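(* Let $R$ be a non-trivial totally ordered positive aura such that $x>y$ implies that there exists $t>0$ with $x=y+t$, and suppose that the canonical map $\mathbb{N}\to R$ is injective. If $R$ is archimedean, then $R$ has tempered growth.
   Context: A halo is a commutative unital semiring with a partial order compatible with its operations ($x\le z,y\le t\Rightarrow xy\le zt,\ x+y\le z+t$). An aura is a halo whose underlying semiring is a semifield; it is positive if $0<1$. A halo is trivial if it is $\{0\}$ or equal to $\{0,1\}$ with $0\le1$, $1+1=1$. A positive halo $A$ is archimedean if $A$ is not reduced to $\{0,1\}$ and for all $x>y>0$ there is $n\in\mathbb{N}$ with $ny>x$. A halo $R$ has tempered growth if for every non-zero $P\in\mathbb{N}[X]$ and $x\in R$, ($x^n\le P(n)$ for all $n\in\mathbb{N}$) implies $x\le1$, where natural numbers are interpreted in $R$ as sums of $1$. *)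

theory Defs
  imports Main "HOL-Computational_Algebra.Polynomial"
begin

definition halo_compat :: "'a::{comm_semiring_1,order} itself \<Rightarrow> bool" where
  "halo_compat _ \<longleftrightarrow>
     (\<forall>x y z t :: 'a. x \<le> z \<longrightarrow> y \<le> t \<longrightarrow> x * y \<le> z * t \<and> x + y \<le> z + t)"

definition semifield :: "'a::comm_semiring_1 itself \<Rightarrow> bool" where
  "semifield _ \<longleftrightarrow> (\<forall>x :: 'a. x \<noteq> 0 \<longrightarrow> (\<exists>y. x * y = 1))"

definition aura :: "'a::{comm_semiring_1,order} itself \<Rightarrow> bool" where
  "aura T \<longleftrightarrow> halo_compat T \<and> semifield TYPE('a)"

definition positive_halo :: "'a::{comm_semiring_1,order} itself \<Rightarrow> bool" where
  "positive_halo T \<longleftrightarrow> halo_compat T \<and> (0::'a) < 1"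

definition trivial_halo :: "'a::{comm_semiring_1,order} itself \<Rightarrow> bool" where
  "trivial_halo _ \<longleftrightarrow> (UNIV = {0::'a}) \<or>
     (UNIV = {0::'a, 1} \<and> (0::'a) \<le> 1 \<and> (1::'a) + 1 = 1)"

definition archimedean_halo :: "'a::{comm_semiring_1,order} itself \<Rightarrow> bool" where
  "archimedean_halo _ \<longleftrightarrow> UNIV \<noteq> {0::'a, 1} \<and>
     (\<forall>x y :: 'a. x > y \<and> y > 0 \<longrightarrow> (\<exists>n::nat. of_nat n * y > x))"

definition tempered_growth :: "'a::{comm_semiring_1,order} itself \<Rightarrow> bool" where
  "tempered_growth _ \<longleftrightarrow>
     (\<forall>(P::nat poly) (x::'a). P \<noteq> 0 \<longrightarrow> (\<forall>n::nat. x ^ n \<le> of_nat (poly P n)) \<longrightarrow> x \<le> 1)"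

end

theory Submission imports Defs begin

lemma lemA: "(K::nat) * (i+1) < 2^i" if "i = 3*(K+1)" for K i
proof -
  have "K+2 \<le> 2^(K+1)"
    by (induction K) auto
  hence "(K+2)^3 \<le> (2^(K+1))^3" by (rule power_mono) simp
  also have "... = 2^i" using that by (metis power_mult mult.commute)
  finally have a: "(K+2)^3 \<le> 2^i" .
  have "K*(i+1) < (K+2)^3" using that by (simp add: power3_eq_cube algebra_simps)
  with a show ?thesis by linarith
qed

lemma lemB: "\<exists>j. (C::nat) * (j+1)^d < 2^j"
proof (cases "C = 0")
  case True then show ?thesis by auto
next
  case False
  define e where "e = d + 1"
  define K where "K = C * e"
  define i where "i = 3*(K+1)"
  have Ki: "K*(i+1) < 2^i" using lemA i_def by blast
  have e1: "e \<ge> 1" "e > 0" by (auto simp: e_def)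
  have "(K*(i+1))^e < (2^i)^e" using Ki e1 by (simp add: power_strict_mono)
  also have "... = 2^(e*i)" by (metis power_mult mult.commute)
  finally have 1: "(K*(i+1))^e < 2^(e*i)" .
  have "C * (e*i+1)^d \<le> C * (e*(i+1))^d"
    using e1 by (intro mult_le_mono2 power_mono) auto
  also have "... = C * e^d * (i+1)^d" by (simp only: power_mult_distrib mult.assoc)
  also have "... \<le> C^e * e^e * (i+1)^e"
  proof (intro mult_le_mono)
    show "C \<le> C^e" using False e1 by (metis One_nat_def Suc_leI neq0_conv power_increasing power_one_right)
    show "e^d \<le> e^e" using e1 by (intro power_increasing) (auto simp: e_def)
    show "(i+1)^d \<le> (i+1)^e" by (intro power_increasing) (auto simp: e_def)
  qed
  also have "... = (K*(i+1))^e" unfolding K_def by (simp only: power_mult_distrib)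
  finally show ?thesis using 1 by (intro exI[of _ "e*i"]) auto
qed

lemma polybound: "poly (P::nat poly) n \<le> poly P 1 * (n+1)^degree P"
proof -
  have "poly P n = (\<Sum>i\<le>degree P. coeff P i * n ^ i)" by (simp add: poly_altdef)
  also have "... \<le> (\<Sum>i\<le>degree P. coeff P i * (n+1) ^ degree P)"
  proof (intro sum_mono mult_le_mono2)
    fix i assume "i \<in> {..degree P}"
    hence "n^i \<le> (n+1)^i" "(n+1)^i \<le> (n+1)^degree P" by (auto intro: power_mono power_increasing)
    thus "n^i \<le> (n+1)^degree P" by linarith
  qed
  also have "... = poly P 1 * (n+1)^degree P" by (simp add: poly_altdef sum_distrib_right)
  finally show ?thesis .
qed

lemma natpart: "\<exists>j. poly (P::nat poly) (N*j) < 2^j"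
proof -
  obtain j where j: "(poly P 1 * (N+1)^degree P) * (j+1)^degree P < 2^j" using lemB by blast
  have "poly P (N*j) \<le> poly P 1 * (N*j+1)^degree P" by (rule polybound)
  also have "... \<le> poly P 1 * ((N+1)*(j+1))^degree P"
    by (intro mult_le_mono2 power_mono) (auto simp: algebra_simps)
  also have "... = (poly P 1 * (N+1)^degree P) * (j+1)^degree P" by (simp only: power_mult_distrib mult.assoc)
  finally show ?thesis using j by (intro exI[of _ j]) linarith
qed

theorem lemma1p29:
  assumes "aura TYPE('a::{comm_semiring_1,linorder})"
    and "positive_halo TYPE('a)"
    and "\<not> trivial_halo TYPE('a)"
    and "\<forall>x y :: 'a. x > y \<longrightarrow> (\<exists>t>0. x = y + t)"
    and "inj (of_nat :: nat \<Rightarrow> 'a)"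
    and "archimedean_halo TYPE('a)"
  shows "tempered_growth TYPE('a)"
proof -
  have mono: "\<And>x y z t :: 'a. x \<le> z \<Longrightarrow> y \<le> t \<Longrightarrow> x * y \<le> z * t \<and> x + y \<le> z + t"
    using assms(1) unfolding aura_def halo_compat_def by blast
  have m: "\<And>x y z t :: 'a. x \<le> z \<Longrightarrow> y \<le> t \<Longrightarrow> x * y \<le> z * t"
    and a: "\<And>x y z t :: 'a. x \<le> z \<Longrightarrow> y \<le> t \<Longrightarrow> x + y \<le> z + t" using mono by blast+
  have h01: "(0::'a) < 1" using assms(2) unfolding positive_halo_def by blast
  have nn: "0 \<le> y" for y :: 'a
    using m[of 0 1 y y] h01 by simp
  have le_add: "\<And>u v::'a. u \<le> u + v" using a[OF order_refl nn] by (metis add_0_right)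
  have ofnat_mono: "\<And>p q. p \<le> q \<Longrightarrow> (of_nat p::'a) \<le> of_nat q"
    by (metis le_add le_add_diff_inverse of_nat_add)
  have ofnat_refl: "\<And>p q. (of_nat p::'a) \<le> of_nat q \<Longrightarrow> p \<le> q"
  proof (rule ccontr)
    fix p q assume h: "(of_nat p::'a) \<le> of_nat q" "\<not> p \<le> q"
    hence "(of_nat q::'a) \<le> of_nat p" using ofnat_mono by simp
    hence "(of_nat q::'a) = of_nat p" using h by simp
    hence "q = p" using assms(5) by (simp add: inj_eq)
    thus False using h by simp
  qed
  have powmono: "\<And>u v::'a. u \<le> v \<Longrightarrow> u^k \<le> v^k" for k
  proof -
    fix u v :: 'a assume "u \<le> v"
    thus "u^k \<le> v^k" by (induction k) (auto intro: m)
  qed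
  show ?thesis unfolding tempered_growth_def
  proof (intro allI impI)
    fix P :: "nat poly" and x :: 'a
    assume "P \<noteq> 0" and h: "\<forall>n. x ^ n \<le> of_nat (poly P n)"
    show "x \<le> 1"
    proof (rule ccontr)
      assume "\<not> x \<le> 1"
      hence "x > 1" by simp
      then obtain t where t: "t > 0" "x = 1 + t" using assms(4) by blast
      obtain N where N: "1 \<le> of_nat N * t"
      proof (cases "t < 1")
        case True
        then obtain n where "of_nat n * t > 1" using assms(6) t unfolding archimedean_halo_def by blast
        thus ?thesis using that[of n] by simp
      next
        case False
        thus ?thesis using that[of 1] by simp
      qed
      have bern: "1 + of_nat n * t \<le> x ^ n" for n
      proof (induction n)
        case 0 then show ?case by simp
      next
        case (Suc n)
        have "1 + of_nat (Suc n) * t = (1 + of_nat n * t) + t" by (simp add: algebra_simps)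
        also have "... \<le> (1 + of_nat n * t) + t + of_nat n * t * t" by (rule le_add)
        also have "... = (1 + of_nat n * t) * (1 + t)" by (simp add: algebra_simps)
        also have "... \<le> x^n * x" using Suc t by (intro m) auto
        finally show ?case by (simp add: mult.commute)
      qed
      have x2: "of_nat 2 \<le> x ^ N"
      proof -
        have "(of_nat 2::'a) = 1 + 1" by simp
        also have "... \<le> 1 + of_nat N * t" by (rule a[OF order_refl N])
        also have "... \<le> x ^ N" by (rule bern)
        finally show ?thesis .
      qed
      have "(of_nat (2^j)::'a) \<le> of_nat (poly P (N*j))" for j
      proof -
        have "(of_nat (2^j)::'a) = (of_nat 2)^j" by simp
        also have "... \<le> (x^N)^j" by (rule powmono[OF x2])
        also have "... = x^(N*j)" by (simp add: power_mult)
        also have "... \<le> of_nat (poly P (N*j))" using h by blast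
        finally show ?thesis .
      qed
      hence "2^j \<le> poly P (N*j)" for j using ofnat_refl by blast
      moreover obtain j where "poly P (N*j) < 2^j" using natpart by blast
      ultimately show False using leD by blast
    qed
  qed
qed

end
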